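(* Assume the setting and conditions below. Then for almost every $\omega\in\Omega$ the function $\theta\mapsto\max_{W\in\mathcal W}F(W,H(\theta,\omega))$ is Fréchet differentiable on $\Theta$, and at each $\theta\in\Theta$ its gradient equals $\nabla_\theta F(W,H(\theta,\omega))|_{W=W^*(\theta,\omega)}$ for every $W^*(\theta,\omega)\in\arg\max_{W\in\mathcal W}F(W,H(\theta,\omega))$, irrespective of the choice of this maximizer.
   Context: Let $\omega$ be a random element with values in $\Omega$; let $K,M$ be positive integers, $M_U=MK$, $S$ a positive integer, $\Theta\subset\mathbb R^S$ compact convex, $\mathcal U\supset\Theta$ open, $H:\mathcal U\times\Omega\to\mathbb C^{M_U}$, $H=\mathrm{vec}(h_1,\dots,h_K)$ with $h_k\in\mathbb C^M$. Let $P>0$ and $\mathcal W=\{W\in\mathbb C^{M_U}:\|W\|^2\le P\}$, $W=\mathrm{vec}(w_1,\dots,w_K)$. $F$ is the weighted sumrate $F(W,H)=\sum_{k=1}^K\alpha_k\log_2\big(1+\frac{|h_k^{\mathsf H}w_k|^2}{\sum_{j\ne k}|h_k^{\mathsf H}w_j|^2+\sigma_k^2}\big)$ with $\alpha_k\ge0$, $\sigma_k^2>0$. Conditions: (A3) there are constants $B_H,L_{H,0},L_{H,1}$ such that for a.e. $\omega$, $H(\cdot,\omega)$ is bounded by $B_H$ on $\Theta$, twice continuously differentiable on $\mathcal U$, $L_{H,0}$-Lipschitz with $L_{H,1}$-Lipschitz gradient on $\Theta$; $H(\cdot,\omega)$ is real-analytic on $\mathcal U$ for a.e. $\omega$; strong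 second-order sufficient optimality: for every $\theta\in\Theta$, a.e. $\omega$ and every maximizer $W^*$ of $F(\cdot,H(\theta,\omega))$ over $\mathcal W$, with Lagrangian $L(W,\lambda;\theta,\omega)=F(W,H(\theta,\omega))+\lambda(\|W\|^2-P)$, there is $\lambda^*\ge0$ with strict complementarity ($\lambda^*>0$ if $\|W^*\|^2=P$, $\lambda^*=0$ otherwise) and $\nabla^2_WL(W^*,\lambda^*;\theta,\omega)$ nonsingular. Further, $\Theta''$ compact and $\Theta'$ open with $\mathcal U\supset\Theta''\supset\Theta'\supset\Theta$, and there are $\eta>0$ and a positive function $C(\theta)$ uniformly bounded on $\Theta''$ such that for a.e. $\omega$ and all $(\theta,W)\in\mathcal U\times\mathcal W$: $\mathrm{dist}(W,\arg\max_{V\in\mathcal W}F(V,H(\theta,\omega)))\le C(\theta)\big(\max_{V\in\mathcal W}F(V,H(\theta,\omega))-F(W,H(\theta,\omega))\big)^\eta$. *)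

theory Defs
  imports "HOL-Probability.Probability"
begin

text \<open>Channel H = vec(h_1,...,h_K), each h_k in C^M, is modelled as an element of
  complex^'m^'k (CARD('k) = K, CARD('m) = M); likewise the beamformer
  W = vec(w_1,...,w_K).  The Euclidean norm of complex^'m^'k is the norm of
  vec(W) in C^(MK).  Complex spaces are regarded as real Euclidean spaces.\<close>

definition herm_ip :: "complex^'m \<Rightarrow> complex^'m \<Rightarrow> complex" where
  "herm_ip h w = (\<Sum>i\<in>UNIV. cnj (h $ i) * w $ i)"

definition sumrate :: "('k::finite \<Rightarrow> real) \<Rightarrow> ('k \<Rightarrow> real) \<Rightarrow>
    complex^'m^'k \<Rightarrow> complex^'m^'k \<Rightarrow> real" where
  "sumrate \<alpha> \<sigma>2 W H = (\<Sum>k\<in>UNIV. \<alpha> k * log 2 (1 +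
      (cmod (herm_ip (H $ k) (W $ k)))\<^sup>2 /
      ((\<Sum>j\<in>UNIV - {k}. (cmod (herm_ip (H $ k) (W $ j)))\<^sup>2) + \<sigma>2 k)))"

definition feasible :: "real \<Rightarrow> ('a::real_normed_vector) set" where
  "feasible P = {W. (norm W)\<^sup>2 \<le> P}"

definition maxval :: "('a \<Rightarrow> real) \<Rightarrow> 'a set \<Rightarrow> real" where
  "maxval f A = (SUP V\<in>A. f V)"

definition argmaxset :: "('a \<Rightarrow> real) \<Rightarrow> 'a set \<Rightarrow> 'a set" where
  "argmaxset f A = {W\<in>A. \<forall>V\<in>A. f V \<le> f W}"

definition C2_on :: "'a::real_normed_vector set \<Rightarrow> ('a \<Rightarrow> 'b::real_normed_vector) \<Rightarrow> bool" where
  "C2_on U f \<longleftrightarrow> (\<exists>f' f''. (\<forall>x\<in>U. (f has_derivative blinfun_apply (f' x)) (at x)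
      \<and> (f' has_derivative blinfun_apply (f'' x)) (at x)) \<and> continuous_on U f'')"

text \<open>Real analyticity of a map on R^S: locally the sum of an (unconditionally,
  equivalently absolutely) convergent multivariate power series.\<close>
definition real_analytic_on :: "(real^'s \<Rightarrow> 'b::real_normed_vector) \<Rightarrow> (real^'s) set \<Rightarrow> bool" where
  "real_analytic_on f U \<longleftrightarrow> (\<forall>x\<in>U. \<exists>r>0. \<exists>c :: ('s \<Rightarrow> nat) \<Rightarrow> 'b.
      \<forall>y\<in>ball x r. ((\<lambda>\<beta>. (\<Prod>i\<in>UNIV. (y $ i - x $ i) ^ \<beta> i) *\<^sub>R c \<beta>) has_sum f y) UNIV)"

definition nonsingular_hessian :: "('a::euclidean_space \<Rightarrow> real) \<Rightarrow> 'a \<Rightarrow> bool" where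
  "nonsingular_hessian f x \<longleftrightarrow> (\<exists>g hs. (\<exists>e>0. \<forall>y\<in>ball x e.
      (f has_derivative (\<lambda>v. g y \<bullet> v)) (at y)) \<and> (g has_derivative hs) (at x) \<and> inj hs)"

end

theory Submission
  imports Defs
begin


definition C1b :: "('a::real_normed_vector \<Rightarrow> real) \<Rightarrow> ('a \<Rightarrow> 'a \<Rightarrow>\<^sub>L real) \<Rightarrow> bool" where
  "C1b f f' \<longleftrightarrow> (\<forall>p. (f has_derivative blinfun_apply (f' p)) (at p)) \<and> continuous_on UNIV f'"

definition C1 :: "('a::real_normed_vector \<Rightarrow> real) \<Rightarrow> bool" where
  "C1 f \<longleftrightarrow> (\<exists>f'. C1b f f')"

lemma C1_cont: "C1 f \<Longrightarrow> continuous_on UNIV f"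
  unfolding C1_def C1b_def
  by (meson continuous_at_imp_continuous_on has_derivative_continuous)

lemma C1_const[intro]: "C1 (\<lambda>p. c)"
  unfolding C1_def C1b_def
  by (rule exI[of _ "\<lambda>_. 0"]) (auto simp: zero_blinfun.rep_eq)

lemma C1_linear: "bounded_linear f \<Longrightarrow> C1 f"
  unfolding C1_def C1b_def
  apply (rule exI[of _ "\<lambda>_. Blinfun f"])
  by (auto simp: bounded_linear_Blinfun_apply bounded_linear_imp_has_derivative)

lemma C1_add[intro]: "C1 f \<Longrightarrow> C1 g \<Longrightarrow> C1 (\<lambda>p. f p + g p)"
  unfolding C1_def C1b_def
  apply clarify
  subgoal for f' g'
    apply (rule exI[of _ "\<lambda>p. f' p + g' p"])
    by (auto intro!: derivative_eq_intros continuous_intros simp: blinfun.add_left)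
  done

lemma C1_mult[intro]: "C1 f \<Longrightarrow> C1 g \<Longrightarrow> C1 (\<lambda>p. f p * g p)"
proof -
  assume a: "C1 f" "C1 g"
  then have cf: "continuous_on UNIV f" and cg: "continuous_on UNIV g" by (auto intro: C1_cont)
  from a obtain f' g' where f: "C1b f f'" and g: "C1b g g'" unfolding C1_def by auto
  show ?thesis unfolding C1_def C1b_def
    apply (rule exI[of _ "\<lambda>p. f p *\<^sub>R g' p + g p *\<^sub>R f' p"])
    using f g cf cg unfolding C1b_def
    by (auto intro!: derivative_eq_intros continuous_intros simp: blinfun.add_left blinfun.scaleR_left)
qed

lemma C1_sum[intro]: "finite A \<Longrightarrow> (\<And>i. i \<in> A \<Longrightarrow> C1 (f i)) \<Longrightarrow> C1 (\<lambda>p. \<Sum>i\<in>A. f i p)"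
  by (induction A rule: finite_induct) auto

lemma C1_ln[intro]: "C1 f \<Longrightarrow> (\<And>p. 0 < f p) \<Longrightarrow> C1 (\<lambda>p. ln (f p))"
proof -
  assume a: "C1 f" "\<And>p. 0 < f p"
  then have cf: "continuous_on UNIV f" by (auto intro: C1_cont)
  from a obtain f' where f: "C1b f f'" unfolding C1_def by auto
  show ?thesis unfolding C1_def C1b_def
    apply (rule exI[of _ "\<lambda>p. inverse (f p) *\<^sub>R f' p"])
    using f cf a(2) unfolding C1b_def
    by (auto intro!: derivative_eq_intros continuous_intros simp: blinfun.scaleR_left dest: less_imp_neq[symmetric])
qed

lemma C1_inverse[intro]: "C1 f \<Longrightarrow> (\<And>p. 0 < f p) \<Longrightarrow> C1 (\<lambda>p. inverse (f p))"
proof -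
  assume a: "C1 f" "\<And>p. 0 < f p"
  then have cf: "continuous_on UNIV f" by (auto intro: C1_cont)
  from a obtain f' where f: "C1b f f'" unfolding C1_def by auto
  show ?thesis unfolding C1_def C1b_def
    apply (rule exI[of _ "\<lambda>p. (- (inverse (f p) * inverse (f p))) *\<^sub>R f' p"])
    using f cf a(2) unfolding C1b_def
    by (auto intro!: derivative_eq_intros continuous_intros simp: blinfun.scaleR_left blinfun.minus_left fun_eq_iff dest: less_imp_neq[symmetric])
qed

lemma C1_cong: "C1 g \<Longrightarrow> (\<And>p. g p = f p) \<Longrightarrow> C1 f"
proof -
  assume "C1 g" "\<And>p. g p = f p"
  then have "g = f" by auto
  with \<open>C1 g\<close> show ?thesis by simp
qed

lemma C1_diff[intro]: "C1 f \<Longrightarrow> C1 g \<Longrightarrow> C1 (\<lambda>p. f p - g p)"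
proof -
  assume "C1 f" "C1 g"
  then have "C1 (\<lambda>p. f p + (-1) * g p)" using C1_add[OF \<open>C1 f\<close> C1_mult[OF C1_const[of "-1"] \<open>C1 g\<close>]] by simp
  then show ?thesis by (rule C1_cong) simp
qed

lemma C1_Re1: "C1 (\<lambda>p::((complex^'m^'k) \<times> (complex^'m^'k)). Re (fst p $ j $ i))"
  by (rule C1_linear) (intro bounded_linear_compose[OF bounded_linear_Re] bounded_linear_compose[OF bounded_linear_vec_nth] bounded_linear_fst)
lemma C1_Re2: "C1 (\<lambda>p::((complex^'m^'k) \<times> (complex^'m^'k)). Re (snd p $ j $ i))"
  by (rule C1_linear) (intro bounded_linear_compose[OF bounded_linear_Re] bounded_linear_compose[OF bounded_linear_vec_nth] bounded_linear_snd)
lemma C1_Im1: "C1 (\<lambda>p::((complex^'m^'k) \<times> (complex^'m^'k)). Im (fst p $ j $ i))"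
  by (rule C1_linear) (intro bounded_linear_compose[OF bounded_linear_Im] bounded_linear_compose[OF bounded_linear_vec_nth] bounded_linear_fst)
lemma C1_Im2: "C1 (\<lambda>p::((complex^'m^'k) \<times> (complex^'m^'k)). Im (snd p $ j $ i))"
  by (rule C1_linear) (intro bounded_linear_compose[OF bounded_linear_Im] bounded_linear_compose[OF bounded_linear_vec_nth] bounded_linear_snd)

lemma C1_cm2: "C1 (\<lambda>p::((complex^'m^'k) \<times> (complex^'m^'k)). (cmod (herm_ip (snd p $ k) (fst p $ j)))\<^sup>2)"
proof -
  let ?R = "\<lambda>p::((complex^'m^'k) \<times> (complex^'m^'k)). \<Sum>i\<in>UNIV. Re (snd p $ k $ i) * Re (fst p $ j $ i) + Im (snd p $ k $ i) * Im (fst p $ j $ i)"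
  let ?I = "\<lambda>p::((complex^'m^'k) \<times> (complex^'m^'k)). \<Sum>i\<in>UNIV. Re (snd p $ k $ i) * Im (fst p $ j $ i) - Im (snd p $ k $ i) * Re (fst p $ j $ i)"
  have "C1 (\<lambda>p. ?R p * ?R p + ?I p * ?I p)"
    by (intro C1_add C1_mult C1_sum C1_diff C1_Re1 C1_Re2 C1_Im1 C1_Im2) auto
  then show ?thesis
    apply (rule C1_cong) apply (simp only: cmod_power2) by (simp add: herm_ip_def Re_sum Im_sum power2_eq_square)
qed

lemma C1_sumrate:
  assumes "\<And>k. \<sigma>2 k > 0"
  shows "C1 (\<lambda>p::((complex^'m^'k::finite) \<times> (complex^'m^'k)). sumrate \<alpha> \<sigma>2 (fst p) (snd p))"
proof -
  let ?c = "\<lambda>p::((complex^'m^'k) \<times> (complex^'m^'k)). \<lambda>k j. (cmod (herm_ip (snd p $ k) (fst p $ j)))\<^sup>2"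
  have pos: "0 < (\<Sum>j\<in>UNIV - {k}. ?c p k j) + \<sigma>2 k" for p k
    using assms[of k] by (smt (verit) sum_nonneg zero_le_power2)
  have pos2: "0 < 1 + ?c p k k * inverse ((\<Sum>j\<in>UNIV - {k}. ?c p k j) + \<sigma>2 k)" for p k
    using pos[of p k] by (smt (verit) inverse_nonnegative_iff_nonnegative mult_nonneg_nonneg zero_le_power2)
  have "C1 (\<lambda>p. \<Sum>k\<in>UNIV. \<alpha> k * (ln (1 + ?c p k k * inverse ((\<Sum>j\<in>UNIV - {k}. ?c p k j) + \<sigma>2 k)) * inverse (ln 2)))"
    apply (intro C1_sum C1_mult C1_const C1_ln C1_add C1_inverse C1_cm2 finite)
    using pos pos2 by auto
  then show ?thesis
    by (rule C1_cong) (simp add: sumrate_def log_def divide_inverse)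
qed



lemma powr_small:
  fixes Cb \<eta> r :: real
  assumes "Cb \<ge> 0" "\<eta> > 0" "r > 0"
  shows "\<exists>\<tau>>0. \<forall>x. 0 \<le> x \<longrightarrow> x < \<tau> \<longrightarrow> Cb * x powr \<eta> < r"
proof -
  define q where "q = r / (Cb + 1)"
  have q: "q > 0" using assms by (simp add: q_def)
  define \<tau> where "\<tau> = q powr (1/\<eta>)"
  have "\<tau> > 0" using q by (simp add: \<tau>_def)
  moreover have "Cb * x powr \<eta> < r" if "0 \<le> x" "x < \<tau>" for x
  proof -
    have "x powr \<eta> \<le> \<tau> powr \<eta>" using that assms by (intro powr_mono2) auto
    also have "\<tau> powr \<eta> = q" using q assms by (simp add: \<tau>_def powr_powr)
    finally have "x powr \<eta> \<le> q" .
    then have "Cb * x powr \<eta> \<le> Cb * q" using assms by (simp add: mult_left_mono)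
    also have "Cb * q < r" using assms by (simp add: q_def field_simps)
    finally show ?thesis .
  qed
  ultimately show ?thesis by blast
qed

lemma danskin:
  fixes g :: "'w::metric_space \<Rightarrow> 'a::real_normed_vector \<Rightarrow> real" and D :: "'w \<Rightarrow> 'a \<Rightarrow> real"
  assumes X: "compact X" "X \<noteq> {}"
    and N: "open N" "\<theta>0 \<in> N"
    and cont: "\<And>\<theta>. \<theta> \<in> N \<Longrightarrow> continuous_on X (\<lambda>W. g W \<theta>)"
    and lin: "\<And>W. W \<in> X \<Longrightarrow> bounded_linear (D W)"
    and exp: "\<And>\<epsilon>. \<epsilon> > 0 \<Longrightarrow> \<exists>\<delta>>0. \<forall>W\<in>X. \<forall>\<theta>. norm (\<theta> - \<theta>0) < \<delta> \<longrightarrow>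
                 \<bar>g W \<theta> - g W \<theta>0 - D W (\<theta> - \<theta>0)\<bar> \<le> \<epsilon> * norm (\<theta> - \<theta>0)"
    and ucont: "\<And>\<epsilon>. \<epsilon> > 0 \<Longrightarrow> \<exists>r>0. \<forall>W\<in>X. \<forall>V\<in>X. dist W V < r \<longrightarrow> (\<forall>v. \<bar>D W v - D V v\<bar> \<le> \<epsilon> * norm v)"
    and bnd: "\<And>W v. W \<in> X \<Longrightarrow> \<bar>D W v\<bar> \<le> B * norm v" and B: "B \<ge> 0"
    and Cb: "Cb \<ge> 0" and eta: "\<eta> > 0"
    and eb: "\<And>\<theta> W. \<theta> \<in> N \<Longrightarrow> W \<in> X \<Longrightarrow> infdist W (argmaxset (\<lambda>W. g W \<theta>) X)
               \<le> Cb * (maxval (\<lambda>W. g W \<theta>) X - g W \<theta>) powr \<eta>"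
  shows "(\<lambda>t. maxval (\<lambda>W. g W t) X) differentiable (at \<theta>0)
    \<and> (\<forall>V\<in>argmaxset (\<lambda>W. g W \<theta>0) X. \<exists>D'. ((\<lambda>t. g V t) has_derivative D') (at \<theta>0)
          \<and> ((\<lambda>t. maxval (\<lambda>W. g W t) X) has_derivative D') (at \<theta>0))"
proof -
  define \<phi> where "\<phi> = (\<lambda>t. maxval (\<lambda>W. g W t) X)"
  define A where "A = (\<lambda>t. argmaxset (\<lambda>W. g W t) X)"
  have S1: "A \<theta> \<noteq> {} \<and> (\<forall>W\<in>X. g W \<theta> \<le> \<phi> \<theta>) \<and> (\<forall>W\<in>A \<theta>. \<phi> \<theta> = g W \<theta>) \<and> A \<theta> \<subseteq> X" if "\<theta> \<in> N" for \<theta>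
  proof -
    have "compact ((\<lambda>W. g W \<theta>) ` X)" by (rule compact_continuous_image[OF cont[OF that] X(1)])
    from compact_attains_sup[OF this] X(2) obtain W0 where W0: "W0 \<in> X" "\<forall>V\<in>X. g V \<theta> \<le> g W0 \<theta>" by auto
    have eq: "\<phi> \<theta> = g W0 \<theta>" unfolding \<phi>_def maxval_def
      by (rule cSup_eq_maximum) (use W0 in blast)+
    have "W0 \<in> A \<theta>" using W0 by (simp add: A_def argmaxset_def)
    moreover have "\<forall>W\<in>A \<theta>. \<phi> \<theta> = g W \<theta>"
    proof
      fix W assume "W \<in> A \<theta>"
      then have "W \<in> X" "\<forall>V\<in>X. g V \<theta> \<le> g W \<theta>" by (auto simp: A_def argmaxset_def)
      then show "\<phi> \<theta> = g W \<theta>" using W0 eq by (metis antisym)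
    qed
    moreover have "\<forall>W\<in>X. g W \<theta> \<le> \<phi> \<theta>" using W0 eq by simp
    moreover have "A \<theta> \<subseteq> X" by (auto simp: A_def argmaxset_def)
    ultimately show ?thesis by blast
  qed
  define K1 where "K1 = B + 1"
  have K1: "K1 > 0" using B by (simp add: K1_def)
  obtain \<delta>1 where \<delta>1: "\<delta>1 > 0" "\<forall>W\<in>X. \<forall>\<theta>. norm (\<theta> - \<theta>0) < \<delta>1 \<longrightarrow>
                 \<bar>g W \<theta> - g W \<theta>0 - D W (\<theta> - \<theta>0)\<bar> \<le> 1 * norm (\<theta> - \<theta>0)"
    using exp[of 1] by auto
  have S2: "\<bar>g W \<theta> - g W \<theta>0\<bar> \<le> K1 * norm (\<theta> - \<theta>0)" if "W \<in> X" "norm (\<theta> - \<theta>0) < \<delta>1" for W \<theta>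
  proof -
    have a: "\<bar>g W \<theta> - g W \<theta>0 - D W (\<theta> - \<theta>0)\<bar> \<le> 1 * norm (\<theta> - \<theta>0)" using \<delta>1(2) that by blast
    have b: "\<bar>D W (\<theta> - \<theta>0)\<bar> \<le> B * norm (\<theta> - \<theta>0)" using bnd[OF that(1)] .
    have "\<bar>g W \<theta> - g W \<theta>0\<bar> \<le> 1 * norm (\<theta> - \<theta>0) + B * norm (\<theta> - \<theta>0)" using a b by linarith
    then show ?thesis by (simp add: K1_def algebra_simps)
  qed
  have S2': "\<bar>\<phi> \<theta> - \<phi> \<theta>0\<bar> \<le> K1 * norm (\<theta> - \<theta>0)" if th: "\<theta> \<in> N" "norm (\<theta> - \<theta>0) < \<delta>1" for \<theta>
  proof -
    obtain W where W: "W \<in> A \<theta>" using S1[OF th(1)] by auto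
    obtain V where V: "V \<in> A \<theta>0" using S1[OF N(2)] by auto
    have "\<phi> \<theta> = g W \<theta>" "\<phi> \<theta>0 = g V \<theta>0" "W \<in> X" "V \<in> X" using S1 th N W V by auto
    moreover have "g W \<theta>0 \<le> \<phi> \<theta>0" "g V \<theta> \<le> \<phi> \<theta>" using S1 th N \<open>W \<in> X\<close> \<open>V \<in> X\<close> by auto
    ultimately show ?thesis using S2[of W \<theta>] S2[of V \<theta>] th by (auto simp: abs_le_iff)
  qed
  obtain e where e: "e > 0" "ball \<theta>0 e \<subseteq> N" using N openE by blast
  have inN: "\<theta> \<in> N" if "norm (\<theta> - \<theta>0) < e" for \<theta>
    using e that by (auto simp: dist_norm norm_minus_commute)
  have S3: "D V1 d \<le> D V2 d" if V: "V1 \<in> A \<theta>0" "V2 \<in> A \<theta>0" for V1 V2 d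
  proof (rule ccontr)
    assume "\<not> D V1 d \<le> D V2 d"
    then have c: "D V1 d - D V2 d > 0" by simp
    define c where "c = D V1 d - D V2 d"
    have VX: "V1 \<in> X" "V2 \<in> X" using S1[OF N(2)] V by auto
    have "d \<noteq> 0"
    proof
      assume "d = 0"
      then show False using c linear_0[OF bounded_linear.linear[OF lin[OF VX(1)]]]
        linear_0[OF bounded_linear.linear[OF lin[OF VX(2)]]] by simp
    qed
    define nd where "nd = norm d"
    have nd: "nd > 0" using \<open>d \<noteq> 0\<close> by (simp add: nd_def)
    have cpos: "c > 0" using c by (simp add: c_def)
    obtain r where r: "r > 0" "\<forall>W\<in>X. \<forall>V\<in>X. dist W V < r \<longrightarrow> (\<forall>v. \<bar>D W v - D V v\<bar> \<le> (c / (4 * nd)) * norm v)"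
      using ucont[of "c / (4 * nd)"] cpos nd by auto
    obtain \<delta>2 where \<delta>2: "\<delta>2 > 0" "\<forall>W\<in>X. \<forall>\<theta>. norm (\<theta> - \<theta>0) < \<delta>2 \<longrightarrow>
                 \<bar>g W \<theta> - g W \<theta>0 - D W (\<theta> - \<theta>0)\<bar> \<le> (c / (8 * nd)) * norm (\<theta> - \<theta>0)"
      using exp[of "c / (8 * nd)"] cpos nd by auto
    obtain \<tau> where \<tau>: "\<tau> > 0" "\<forall>x. 0 \<le> x \<longrightarrow> x < \<tau> \<longrightarrow> Cb * x powr \<eta> < r"
      using powr_small[OF Cb eta r(1)] by auto
    define m where "m = min \<delta>2 (min \<delta>1 (min e \<tau>))"
    have m: "m > 0" "m \<le> \<delta>2" "m \<le> \<delta>1" "m \<le> e" "m \<le> \<tau>" using \<delta>2 \<delta>1 e \<tau> by (auto simp: m_def)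
    define t where "t = m / (2 * nd * (2 * K1 + 1))"
    have t: "t > 0" using m nd K1 by (simp add: t_def)
    have tnd: "t * nd = m / (2 * (2 * K1 + 1))" using nd by (simp add: t_def)
    have tnd1: "t * nd < m" unfolding tnd using m K1 by (simp add: field_simps add_pos_pos)
    have tnd2: "2 * K1 * (t * nd) < m" unfolding tnd using m K1 by (simp add: field_simps add_pos_pos)
    define \<theta>t where "\<theta>t = \<theta>0 + t *\<^sub>R d"
    have nt: "norm (\<theta>t - \<theta>0) = t * nd" using t by (simp add: \<theta>t_def nd_def)
    have \<theta>tN: "\<theta>t \<in> N" using inN[of \<theta>t] nt tnd1 m by simp
    have Dlin: "D W (\<theta>t - \<theta>0) = t * D W d" if "W \<in> X" for W
      using linear_scale[OF bounded_linear.linear[OF lin[OF that]]] by (simp add: \<theta>t_def)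
    have far: "r \<le> dist V2 W" if W: "W \<in> A \<theta>t" for W
    proof (rule ccontr)
      assume "\<not> r \<le> dist V2 W"
      then have dW: "dist W V2 < r" by (simp add: dist_commute)
      have WX: "W \<in> X" using S1[OF \<theta>tN] W by auto
      have "\<bar>D W d - D V2 d\<bar> \<le> (c / (4 * nd)) * norm d" using r(2) WX VX dW by blast
      then have "\<bar>D W d - D V2 d\<bar> \<le> c / 4" using nd by (simp add: nd_def)
      then have h1: "D W d \<le> D V2 d + c / 4" by linarith
      have "norm (\<theta>t - \<theta>0) < \<delta>2" using nt tnd1 m by linarith
      then have a2: "\<bar>g W \<theta>t - g W \<theta>0 - D W (\<theta>t - \<theta>0)\<bar> \<le> (c / (8 * nd)) * norm (\<theta>t - \<theta>0)"
        and a3: "\<bar>g V1 \<theta>t - g V1 \<theta>0 - D V1 (\<theta>t - \<theta>0)\<bar> \<le> (c / (8 * nd)) * norm (\<theta>t - \<theta>0)"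
        using \<delta>2(2) WX VX by blast+
      have e8: "(c / (8 * nd)) * norm (\<theta>t - \<theta>0) = t * c / 8" using nd nt by (simp add: field_simps)
      have h2: "g W \<theta>t \<le> g W \<theta>0 + t * D W d + t * c / 8"
        using a2 e8 Dlin[OF WX] by linarith
      have h3: "g V1 \<theta>t \<ge> g V1 \<theta>0 + t * D V1 d - t * c / 8"
        using a3 e8 Dlin[OF VX(1)] by linarith
      have h4: "g W \<theta>0 \<le> g V1 \<theta>0" using S1[OF N(2)] WX V by auto
      have h5: "g V1 \<theta>t \<le> g W \<theta>t" using S1[OF \<theta>tN] W VX by auto
      have h6: "t * D W d \<le> t * D V2 d + t * c / 4" using h1 t
        by (metis distrib_left less_eq_real_def mult_left_mono times_divide_eq_right)
      have "g V1 \<theta>t - g W \<theta>t \<ge> t * D V1 d - t * D V2 d - t * c / 2"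
        using h2 h3 h4 h6 by linarith
      moreover have "t * D V1 d - t * D V2 d - t * c / 2 = t * c / 2" by (simp add: c_def field_simps)
      moreover have "t * c / 2 > 0" using t cpos by simp
      ultimately show False using h5 by linarith
    qed
    have "r \<le> infdist V2 (A \<theta>t)"
      using S1[OF \<theta>tN] far by (auto simp: infdist_notempty intro!: cINF_greatest)
    also have "\<dots> \<le> Cb * (\<phi> \<theta>t - g V2 \<theta>t) powr \<eta>"
      using eb[OF \<theta>tN VX(2)] by (simp add: A_def \<phi>_def)
    also have "\<dots> < r"
    proof -
      have x0: "0 \<le> \<phi> \<theta>t - g V2 \<theta>t" using S1[OF \<theta>tN] VX by auto
      have "\<phi> \<theta>t - \<phi> \<theta>0 \<le> K1 * (t * nd)" using S2'[OF \<theta>tN] nt tnd1 m by (auto simp: abs_le_iff)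
      moreover have "g V2 \<theta>0 - g V2 \<theta>t \<le> K1 * (t * nd)" using S2[OF VX(2), of \<theta>t] nt tnd1 m by (auto simp: abs_le_iff)
      moreover have "\<phi> \<theta>0 = g V2 \<theta>0" using S1[OF N(2)] V(2) by blast
      ultimately have "\<phi> \<theta>t - g V2 \<theta>t < \<tau>" using tnd2 m by linarith
      then show ?thesis using \<tau>(2) x0 by blast
    qed
    finally show False by simp
  qed
  have S3': "D V1 = D V2" if "V1 \<in> A \<theta>0" "V2 \<in> A \<theta>0" for V1 V2
    using S3 that by (intro ext antisym) auto
  have S4: "((\<lambda>t. g V t) has_derivative D V) (at \<theta>0) \<and> (\<phi> has_derivative D V) (at \<theta>0)" if V: "V \<in> A \<theta>0" for V
  proof
    have VX: "V \<in> X" using S1[OF N(2)] V by auto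
    show "((\<lambda>t. g V t) has_derivative D V) (at \<theta>0)"
      unfolding has_derivative_at_alt
    proof (intro conjI lin[OF VX] allI impI)
      fix \<epsilon> :: real assume "\<epsilon> > 0"
      then obtain \<delta> where "\<delta> > 0" "\<forall>W\<in>X. \<forall>\<theta>. norm (\<theta> - \<theta>0) < \<delta> \<longrightarrow>
                 \<bar>g W \<theta> - g W \<theta>0 - D W (\<theta> - \<theta>0)\<bar> \<le> \<epsilon> * norm (\<theta> - \<theta>0)" using exp by blast
      then show "\<exists>d>0. \<forall>y. norm (y - \<theta>0) < d \<longrightarrow> norm (g V y - g V \<theta>0 - D V (y - \<theta>0)) \<le> \<epsilon> * norm (y - \<theta>0)"
        using VX by auto
    qed
    show "(\<phi> has_derivative D V) (at \<theta>0)"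
      unfolding has_derivative_at_alt
    proof (intro conjI lin[OF VX] allI impI)
      fix \<epsilon> :: real assume \<epsilon>: "\<epsilon> > 0"
      then obtain \<delta>a where \<delta>a: "\<delta>a > 0" "\<forall>W\<in>X. \<forall>\<theta>. norm (\<theta> - \<theta>0) < \<delta>a \<longrightarrow>
                 \<bar>g W \<theta> - g W \<theta>0 - D W (\<theta> - \<theta>0)\<bar> \<le> (\<epsilon>/2) * norm (\<theta> - \<theta>0)" using exp[of "\<epsilon>/2"] by auto
      obtain r where r: "r > 0" "\<forall>W\<in>X. \<forall>V\<in>X. dist W V < r \<longrightarrow> (\<forall>v. \<bar>D W v - D V v\<bar> \<le> (\<epsilon>/2) * norm v)"
        using ucont[of "\<epsilon>/2"] \<epsilon> by auto
      obtain \<tau> where \<tau>: "\<tau> > 0" "\<forall>x. 0 \<le> x \<longrightarrow> x < \<tau> \<longrightarrow> Cb * x powr \<eta> < r"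
        using powr_small[OF Cb eta r(1)] by auto
      define \<delta> where "\<delta> = min \<delta>a (min \<delta>1 (min e (\<tau> / (2 * K1 + 1))))"
      have \<delta>: "\<delta> > 0" using \<delta>a \<delta>1 e \<tau> K1 by (simp add: \<delta>_def)
      have "norm (\<phi> \<theta> - \<phi> \<theta>0 - D V (\<theta> - \<theta>0)) \<le> \<epsilon> * norm (\<theta> - \<theta>0)" if th: "norm (\<theta> - \<theta>0) < \<delta>" for \<theta>
      proof -
        define n where "n = norm (\<theta> - \<theta>0)"
        have n: "n < \<delta>a" "n < \<delta>1" "n < e" "n < \<tau> / (2 * K1 + 1)" "n \<ge> 0"
          using th by (auto simp: n_def \<delta>_def)
        have n2: "2 * K1 * n < \<tau>"
        proof -
          have "2 * K1 * n \<le> (2 * K1 + 1) * n" using n(5) by (simp add: mult_right_mono)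
          also have "\<dots> < \<tau>" using n(4) K1 by (simp add: field_simps)
          finally show ?thesis .
        qed
        have \<theta>N: "\<theta> \<in> N" using inN n(3) by (simp add: n_def)
        obtain W where W: "W \<in> A \<theta>" using S1[OF \<theta>N] by blast
        have WX: "W \<in> X" using S1[OF \<theta>N] W by blast
        have e1: "\<phi> \<theta> = g W \<theta>" "\<phi> \<theta>0 = g V \<theta>0" using S1[OF \<theta>N] S1[OF N(2)] W V by blast+
        have e2: "g W \<theta>0 \<le> \<phi> \<theta>0" "g V \<theta> \<le> \<phi> \<theta>" using S1[OF \<theta>N] S1[OF N(2)] WX VX by blast+
        have lo: "\<bar>g V \<theta> - g V \<theta>0 - D V (\<theta> - \<theta>0)\<bar> \<le> (\<epsilon>/2) * n"
          using \<delta>a(2) VX n by (auto simp: n_def)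
        have up: "\<bar>g W \<theta> - g W \<theta>0 - D W (\<theta> - \<theta>0)\<bar> \<le> (\<epsilon>/2) * n"
          using \<delta>a(2) WX n by (auto simp: n_def)
        have "infdist W (A \<theta>0) \<le> Cb * (\<phi> \<theta>0 - g W \<theta>0) powr \<eta>"
          using eb[OF N(2) WX] by (simp add: A_def \<phi>_def)
        also have "\<dots> < r"
        proof -
          have "\<bar>\<phi> \<theta> - \<phi> \<theta>0\<bar> \<le> K1 * n" using S2'[OF \<theta>N] n by (simp add: n_def)
          moreover have "\<bar>g W \<theta> - g W \<theta>0\<bar> \<le> K1 * n" using S2[OF WX] n by (simp add: n_def)
          ultimately have "\<phi> \<theta>0 - g W \<theta>0 < \<tau>" using e1 n2 by (auto simp: abs_le_iff)
          then show ?thesis using \<tau>(2) e2 by simp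
        qed
        finally have "infdist W (A \<theta>0) < r" .
        moreover have ne: "A \<theta>0 \<noteq> {}" using S1[OF N(2)] by blast
        ultimately have "(INF a\<in>A \<theta>0. dist W a) < r" by (simp add: infdist_notempty)
        moreover have "bdd_below ((\<lambda>a. dist W a) ` A \<theta>0)" by (rule bdd_belowI[of _ 0]) auto
        ultimately obtain V' where V': "V' \<in> A \<theta>0" "dist W V' < r"
          using cINF_less_iff[OF ne] by blast
        have V'X: "V' \<in> X" using S1[OF N(2)] V' by blast
        have "\<bar>D W (\<theta> - \<theta>0) - D V' (\<theta> - \<theta>0)\<bar> \<le> (\<epsilon>/2) * norm (\<theta> - \<theta>0)"
          using r(2) WX V'X V'(2) by blast
        moreover have "D V' = D V" using S3'[OF V'(1) V] .
        ultimately have dd: "\<bar>D W (\<theta> - \<theta>0) - D V (\<theta> - \<theta>0)\<bar> \<le> (\<epsilon>/2) * n" by (simp add: n_def)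
        have "\<bar>\<phi> \<theta> - \<phi> \<theta>0 - D V (\<theta> - \<theta>0)\<bar> \<le> \<epsilon> * n"
          using lo up e1 e2 dd unfolding abs_le_iff by linarith
        then show ?thesis by (simp add: n_def)
      qed
      then show "\<exists>d>0. \<forall>y. norm (y - \<theta>0) < d \<longrightarrow> norm (\<phi> y - \<phi> \<theta>0 - D V (y - \<theta>0)) \<le> \<epsilon> * norm (y - \<theta>0)"
        using \<delta> by blast
    qed
  qed
  obtain V0 where "V0 \<in> A \<theta>0" using S1[OF N(2)] by blast
  then have "\<phi> differentiable (at \<theta>0)" using S4 by (auto simp: differentiable_def)
  then show ?thesis using S4 unfolding \<phi>_def A_def by blast
qed



lemma C1b_unif:
  fixes F :: "'a::euclidean_space \<Rightarrow> real"
  assumes "C1b F F'" "compact K" "\<epsilon> > 0"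
  shows "\<exists>\<delta>>0. \<forall>p\<in>K. \<forall>q\<in>K. dist p q < \<delta> \<longrightarrow> norm (F' p - F' q) < \<epsilon>"
proof -
  have "continuous_on K F'" using assms(1) unfolding C1b_def by (meson continuous_on_subset subset_UNIV)
  then have "uniformly_continuous_on K F'" using assms(2) by (rule compact_uniformly_continuous)
  then obtain d where d: "d > 0" "\<forall>x\<in>K. \<forall>x'\<in>K. dist x' x < d \<longrightarrow> dist (F' x') (F' x) < \<epsilon>"
    using assms(3) unfolding uniformly_continuous_on_def by blast
  show ?thesis
    by (rule exI[of _ d]) (use d in \<open>auto simp: dist_norm\<close>)
qed

lemma C1b_exp:
  fixes F :: "'a::euclidean_space \<Rightarrow> real"
  assumes C: "C1b F F'" and e: "\<epsilon> > 0"
  shows "\<exists>\<delta>>0. \<forall>p q. norm p \<le> R \<longrightarrow> norm q \<le> R \<longrightarrow> dist p q < \<delta> \<longrightarrow>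
            \<bar>F q - F p - F' p (q - p)\<bar> \<le> \<epsilon> * norm (q - p)"
proof -
  obtain \<delta> where \<delta>: "\<delta> > 0" "\<forall>p\<in>cball 0 R. \<forall>q\<in>cball 0 R. dist p q < \<delta> \<longrightarrow> norm (F' p - F' q) < \<epsilon>"
    using C1b_unif[OF C compact_cball e] by blast
  have "\<bar>F q - F p - F' p (q - p)\<bar> \<le> \<epsilon> * norm (q - p)"
    if pq: "norm p \<le> R" "norm q \<le> R" "dist p q < \<delta>" for p q
  proof -
    define S where "S = cball 0 R \<inter> ball p \<delta>"
    have cS: "convex S" unfolding S_def by (intro convex_Int convex_cball convex_ball)
    have der: "((\<lambda>x. F x - F' p x) has_derivative (\<lambda>h. F' x h - F' p h)) (at x within S)" for x
    proof -
      have d1: "(F has_derivative F' x) (at x within S)" using C unfolding C1b_def by (blast intro: has_derivative_at_withinI)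
      have d2: "(blinfun_apply (F' p) has_derivative blinfun_apply (F' p)) (at x within S)"
        by (rule bounded_linear_imp_has_derivative[OF blinfun.bounded_linear_right])
      show ?thesis using has_derivative_diff[OF d1 d2] .
    qed
    have on: "onorm (\<lambda>h. F' x h - F' p h) \<le> \<epsilon>" if "x \<in> S" for x
    proof -
      have "(\<lambda>h. F' x h - F' p h) = blinfun_apply (F' x - F' p)" by (simp add: fun_eq_iff blinfun.diff_left)
      then have "onorm (\<lambda>h. F' x h - F' p h) = norm (F' x - F' p)" by (simp add: norm_blinfun.rep_eq)
      also have "\<dots> < \<epsilon>" using \<delta>(2) that pq unfolding S_def by (auto simp: norm_minus_commute dist_norm)
      finally show ?thesis by simp
    qed
    have pS: "p \<in> S" "q \<in> S" using pq \<delta>(1) by (auto simp: S_def)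
    have "norm ((F q - F' p q) - (F p - F' p p)) \<le> \<epsilon> * norm (q - p)"
      by (rule differentiable_bound[OF cS der on pS(2) pS(1)])
    moreover have "(F q - F' p q) - (F p - F' p p) = F q - F p - F' p (q - p)"
      by (simp add: blinfun.diff_right)
    ultimately show ?thesis by simp
  qed
  then show ?thesis using \<delta>(1) by blast
qed

lemma feasible_cball: "P > 0 \<Longrightarrow> feasible P = cball (0::'a::real_normed_vector) (sqrt P)"
proof -
  assume P: "P > 0"
  have *: "(norm (W::'a))\<^sup>2 \<le> P \<longleftrightarrow> norm W \<le> sqrt P" for W
  proof
    assume "(norm W)\<^sup>2 \<le> P" then show "norm W \<le> sqrt P" by (rule real_le_rsqrt)
  next
    assume "norm W \<le> sqrt P"
    then have "(norm W)\<^sup>2 \<le> (sqrt P)\<^sup>2" by (simp add: power_mono)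
    then show "(norm W)\<^sup>2 \<le> P" using P by simp
  qed
  show ?thesis by (rule set_eqI) (simp add: feasible_def *)
qed

lemma pointwise:
  fixes h :: "real^'s \<Rightarrow> complex^'m^'k"
    and \<alpha> \<sigma>2 :: "'k \<Rightarrow> real"
    and P \<eta> Bc :: real
    and \<Theta> \<Theta>' \<Theta>'' U :: "(real^'s) set"
    and C :: "real^'s \<Rightarrow> real"
    and H' :: "real^'s \<Rightarrow> (real^'s) \<Rightarrow>\<^sub>L (complex^'m^'k)"
  assumes \<sigma>_pos: "\<forall>k. \<sigma>2 k > 0"
    and P_pos: "P > 0"
    and \<Theta>_sub: "\<Theta> \<subseteq> U" and U_open: "open U"
    and \<Theta>'_open: "open \<Theta>'"
    and chain: "\<Theta>' \<subseteq> \<Theta>''" "\<Theta> \<subseteq> \<Theta>'"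
    and \<eta>_pos: "\<eta> > 0"
    and C_pos: "\<forall>\<theta>\<in>U. C \<theta> > 0"
    and C_bdd: "\<forall>\<theta>\<in>\<Theta>''. C \<theta> \<le> Bc"
    and hd: "\<forall>\<theta>\<in>U. (h has_derivative blinfun_apply (H' \<theta>)) (at \<theta>)"
    and eb: "\<forall>\<theta>\<in>U. \<forall>W\<in>feasible P.
        infdist W (argmaxset (\<lambda>V. sumrate \<alpha> \<sigma>2 V (h \<theta>)) (feasible P))
          \<le> C \<theta> * (maxval (\<lambda>V. sumrate \<alpha> \<sigma>2 V (h \<theta>)) (feasible P)
                     - sumrate \<alpha> \<sigma>2 W (h \<theta>)) powr \<eta>"
    and \<theta>0: "\<theta>0 \<in> \<Theta>"
  shows "(\<lambda>t. maxval (\<lambda>W. sumrate \<alpha> \<sigma>2 W (h t)) (feasible P)) differentiable (at \<theta>0)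
    \<and> (\<forall>Wopt\<in>argmaxset (\<lambda>W. sumrate \<alpha> \<sigma>2 W (h \<theta>0)) (feasible P).
         \<exists>D. ((\<lambda>t. sumrate \<alpha> \<sigma>2 Wopt (h t)) has_derivative D) (at \<theta>0)
           \<and> ((\<lambda>t. maxval (\<lambda>W. sumrate \<alpha> \<sigma>2 W (h t)) (feasible P)) has_derivative D) (at \<theta>0))"
proof -
  define Fs where "Fs = (\<lambda>p::((complex^'m^'k) \<times> (complex^'m^'k)). sumrate \<alpha> \<sigma>2 (fst p) (snd p))"
  have "C1 Fs" unfolding Fs_def by (rule C1_sumrate) (use \<sigma>_pos in auto)
  then obtain F' where F': "C1b Fs F'" unfolding C1_def by blast
  have cFs: "continuous_on UNIV Fs" using \<open>C1 Fs\<close> by (rule C1_cont)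
  define X where "X = (feasible P :: (complex^'m^'k) set)"
  have Xc: "X = cball 0 (sqrt P)" unfolding X_def using P_pos by (rule feasible_cball)
  have X1: "compact X" "X \<noteq> {}" unfolding Xc using P_pos by auto
  have normX: "norm W \<le> sqrt P" if "W \<in> X" for W using that Xc by auto
  define N where "N = U \<inter> \<Theta>'"
  have N: "open N" "\<theta>0 \<in> N" using U_open \<Theta>'_open \<Theta>_sub chain \<theta>0 by (auto simp: N_def)
  define h0 where "h0 = h \<theta>0"
  define L where "L = H' \<theta>0"
  have nLp: "0 < norm L + 1" by (smt (verit) norm_ge_zero)
  have hd0: "(h has_derivative blinfun_apply L) (at \<theta>0)" using hd \<theta>0 \<Theta>_sub by (auto simp: L_def)
  define R where "R = sqrt P + norm h0 + 1"
  have "compact (F' ` cball 0 R)"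
    using F' unfolding C1b_def by (intro compact_continuous_image compact_cball) (meson continuous_on_subset subset_UNIV)
  then obtain Bd where Bd: "Bd > 0" "\<forall>x\<in>F' ` cball 0 R. norm x \<le> Bd"
    using compact_imp_bounded bounded_pos by metis
  have Bdp: "norm (F' p) \<le> Bd" if "norm p \<le> R" for p using Bd that by auto
  have pR: "norm (W, h0) \<le> R" if "W \<in> X" for W
    using norm_Pair_le[of W h0] normX[OF that] by (simp add: R_def)
  define D where "D = (\<lambda>W v. F' (W, h0) (0, L v))"
  have lin: "bounded_linear (D W)" if "W \<in> X" for W
    unfolding D_def
    by (rule bounded_linear_compose[OF blinfun.bounded_linear_right bounded_linear_Pair[OF bounded_linear_zero blinfun.bounded_linear_right]])
  have Dn: "\<bar>D W v\<bar> \<le> norm (F' (W, h0)) * (norm L * norm v)" for W v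
  proof -
    have "\<bar>D W v\<bar> \<le> norm (F' (W, h0)) * norm ((0::complex^'m^'k), L v)"
      unfolding D_def using norm_blinfun[of "F' (W, h0)" "(0, L v)"] by simp
    also have "norm ((0::complex^'m^'k), L v) = norm (L v)" by (simp add: norm_Pair)
    also have "norm (L v) \<le> norm L * norm v" by (rule norm_blinfun)
    finally show ?thesis by (simp add: mult_left_mono)
  qed
  have bnd: "\<bar>D W v\<bar> \<le> (Bd * norm L) * norm v" if "W \<in> X" for W v
  proof -
    have "\<bar>D W v\<bar> \<le> norm (F' (W, h0)) * (norm L * norm v)" by (rule Dn)
    also have "\<dots> \<le> Bd * (norm L * norm v)" using Bdp[OF pR[OF that]] by (simp add: mult_right_mono)
    finally show ?thesis by simp
  qed
  have B0: "Bd * norm L \<ge> 0" using Bd by simp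
  have cont: "continuous_on X (\<lambda>W. sumrate \<alpha> \<sigma>2 W (h \<theta>))" if "\<theta> \<in> N" for \<theta>
  proof -
    have "continuous_on X (Fs \<circ> (\<lambda>W. (W, h \<theta>)))"
      by (intro continuous_on_compose continuous_intros continuous_on_subset[OF cFs]) auto
    then show ?thesis by (simp add: o_def Fs_def)
  qed
  have ucont: "\<exists>r>0. \<forall>W\<in>X. \<forall>V\<in>X. dist W V < r \<longrightarrow> (\<forall>v. \<bar>D W v - D V v\<bar> \<le> \<epsilon> * norm v)"
    if e: "\<epsilon> > 0" for \<epsilon>
  proof -
    define e' where "e' = \<epsilon> / (norm L + 1)"
    have e': "e' > 0" using e nLp by (simp add: e'_def)
    obtain \<delta> where \<delta>: "\<delta> > 0" "\<forall>p\<in>cball 0 R. \<forall>q\<in>cball 0 R. dist p q < \<delta> \<longrightarrow> norm (F' p - F' q) < e'"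
      using C1b_unif[OF F' compact_cball e'] by blast
    have "\<bar>D W v - D V v\<bar> \<le> \<epsilon> * norm v" if WV: "W \<in> X" "V \<in> X" "dist W V < \<delta>" for W V v
    proof -
      have "dist (W, h0) (V, h0) = dist W V" by (simp add: dist_Pair_Pair)
      then have nF: "norm (F' (W, h0) - F' (V, h0)) \<le> e'" using \<delta>(2) pR WV by (auto intro: less_imp_le)
      have "D W v - D V v = D W v - D V v" ..
      have "\<bar>D W v - D V v\<bar> = \<bar>(F' (W, h0) - F' (V, h0)) (0, L v)\<bar>" by (simp add: D_def blinfun.diff_left)
      also have "\<dots> \<le> norm (F' (W, h0) - F' (V, h0)) * (norm L * norm v)"
      proof -
        have "\<bar>(F' (W, h0) - F' (V, h0)) (0, L v)\<bar> \<le> norm (F' (W, h0) - F' (V, h0)) * norm ((0::complex^'m^'k), L v)"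
          using norm_blinfun[of "F' (W, h0) - F' (V, h0)" "(0, L v)"] by simp
        also have "norm ((0::complex^'m^'k), L v) = norm (L v)" by (simp add: norm_Pair)
        also have "norm (L v) \<le> norm L * norm v" by (rule norm_blinfun)
        finally show ?thesis by (simp add: mult_left_mono)
      qed
      also have "\<dots> \<le> e' * ((norm L + 1) * norm v)"
        using nF e' by (intro mult_mono) (auto simp: mult_right_mono)
      also have "\<dots> = \<epsilon> * norm v" using e nLp by (simp add: e'_def field_simps)
      finally show ?thesis .
    qed
    then show ?thesis using \<delta>(1) by blast
  qed
  have exp: "\<exists>\<delta>>0. \<forall>W\<in>X. \<forall>\<theta>. norm (\<theta> - \<theta>0) < \<delta> \<longrightarrow>
                 \<bar>sumrate \<alpha> \<sigma>2 W (h \<theta>) - sumrate \<alpha> \<sigma>2 W (h \<theta>0) - D W (\<theta> - \<theta>0)\<bar> \<le> \<epsilon> * norm (\<theta> - \<theta>0)"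
    if e: "\<epsilon> > 0" for \<epsilon>
  proof -
    define nL where "nL = norm L"
    have nL: "nL \<ge> 0" by (simp add: nL_def)
    have nLp': "0 < nL + 1" using nL by linarith
    define e1 where "e1 = \<epsilon> / (2 * (nL + 1))"
    define e2 where "e2 = \<epsilon> / (2 * (Bd + 1))"
    have e12: "e1 > 0" "e2 > 0" using e nLp' Bd by (auto simp: e1_def e2_def)
    obtain \<delta>a where \<delta>a: "\<delta>a > 0" "\<forall>p q. norm p \<le> R \<longrightarrow> norm q \<le> R \<longrightarrow> dist p q < \<delta>a \<longrightarrow>
            \<bar>Fs q - Fs p - F' p (q - p)\<bar> \<le> e1 * norm (q - p)"
      using C1b_exp[OF F' e12(1)] by blast
    obtain \<delta>b where \<delta>b: "\<delta>b > 0" "\<forall>y. norm (y - \<theta>0) < \<delta>b \<longrightarrow> norm (h y - h \<theta>0 - L (y - \<theta>0)) \<le> e2 * norm (y - \<theta>0)"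
      using hd0 e12(2) unfolding has_derivative_at_alt by blast
    obtain \<delta>c where \<delta>c: "\<delta>c > 0" "\<forall>y. norm (y - \<theta>0) < \<delta>c \<longrightarrow> norm (h y - h \<theta>0 - L (y - \<theta>0)) \<le> 1 * norm (y - \<theta>0)"
      using hd0 unfolding has_derivative_at_alt by (meson zero_less_one)
    define \<delta> where "\<delta> = min \<delta>b (min \<delta>c (min (\<delta>a / (nL + 1)) (1 / (nL + 1))))"
    have \<delta>: "\<delta> > 0" using \<delta>a \<delta>b \<delta>c nLp' by (simp add: \<delta>_def)
    have "\<bar>sumrate \<alpha> \<sigma>2 W (h \<theta>) - sumrate \<alpha> \<sigma>2 W (h \<theta>0) - D W (\<theta> - \<theta>0)\<bar> \<le> \<epsilon> * norm (\<theta> - \<theta>0)"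
      if W: "W \<in> X" and th: "norm (\<theta> - \<theta>0) < \<delta>" for W \<theta>
    proof -
      define n where "n = norm (\<theta> - \<theta>0)"
      define \<Delta> where "\<Delta> = h \<theta> - h0"
      have n: "n < \<delta>b" "n < \<delta>c" "n < \<delta>a / (nL + 1)" "n < 1 / (nL + 1)" "n \<ge> 0"
        using th by (auto simp: n_def \<delta>_def)
      have r1: "norm (\<Delta> - L (\<theta> - \<theta>0)) \<le> e2 * n" using \<delta>b(2) n by (simp add: \<Delta>_def h0_def n_def)
      have r2: "norm (\<Delta> - L (\<theta> - \<theta>0)) \<le> n" using \<delta>c(2) n by (simp add: \<Delta>_def h0_def n_def)
      have "norm \<Delta> \<le> norm (\<Delta> - L (\<theta> - \<theta>0)) + norm (L (\<theta> - \<theta>0))" using norm_triangle_ineq[of "\<Delta> - L (\<theta> - \<theta>0)" "L (\<theta> - \<theta>0)"] by simp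
      also have "norm (L (\<theta> - \<theta>0)) \<le> nL * n" unfolding nL_def n_def by (rule norm_blinfun)
      finally have nD: "norm \<Delta> \<le> (nL + 1) * n" using r2 by (simp add: algebra_simps)
      have nD1: "norm \<Delta> < \<delta>a" "norm \<Delta> < 1"
      proof -
        have a: "(nL + 1) * n < \<delta>a" using mult_strict_left_mono[OF n(3) nLp'] nLp' by simp
        have b: "(nL + 1) * n < 1" using mult_strict_left_mono[OF n(4) nLp'] nLp' by simp
        show "norm \<Delta> < \<delta>a" "norm \<Delta> < 1" using nD a b by linarith+
      qed
      define p where "p = (W, h0)"
      define q where "q = (W, h \<theta>)"
      have pq: "norm p \<le> R" "norm q \<le> R" "dist p q < \<delta>a" "q - p = (0, \<Delta>)" "norm (q - p) = norm \<Delta>"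
      proof -
        show "norm p \<le> R" using pR[OF W] by (simp add: p_def)
        have "norm q \<le> norm W + norm (h \<theta>)" unfolding q_def by (rule norm_Pair_le)
        also have "norm (h \<theta>) \<le> norm h0 + norm \<Delta>" unfolding \<Delta>_def by (metis norm_triangle_sub add.commute)
        finally show "norm q \<le> R" using normX[OF W] nD1 by (simp add: R_def)
        show "q - p = (0, \<Delta>)" by (simp add: p_def q_def \<Delta>_def)
        then show "norm (q - p) = norm \<Delta>" by (simp add: norm_Pair)
        show "dist p q < \<delta>a" using nD1 by (simp add: p_def q_def dist_Pair_Pair dist_norm \<Delta>_def norm_minus_commute)
      qed
      have t1: "\<bar>Fs q - Fs p - F' p (0, \<Delta>)\<bar> \<le> e1 * norm \<Delta>"
        using \<delta>a(2) pq by metis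
      have t2: "\<bar>F' p (0, \<Delta>) - D W (\<theta> - \<theta>0)\<bar> \<le> Bd * (e2 * n)"
      proof -
        have "F' p (0, \<Delta>) - D W (\<theta> - \<theta>0) = F' p (0, \<Delta> - L (\<theta> - \<theta>0))"
          by (simp add: D_def p_def flip: blinfun.diff_right)
        also have "\<bar>\<dots>\<bar> \<le> norm (F' p) * norm ((0::complex^'m^'k), \<Delta> - L (\<theta> - \<theta>0))"
          using norm_blinfun[of "F' p" "(0, \<Delta> - L (\<theta> - \<theta>0))"] by simp
        also have "norm ((0::complex^'m^'k), \<Delta> - L (\<theta> - \<theta>0)) = norm (\<Delta> - L (\<theta> - \<theta>0))" by (simp add: norm_Pair)
        also have "norm (F' p) * norm (\<Delta> - L (\<theta> - \<theta>0)) \<le> Bd * (e2 * n)"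
          using Bdp[OF pq(1)] r1 Bd(1) by (intro mult_mono) auto
        finally show ?thesis .
      qed
      have t3: "e1 * norm \<Delta> \<le> e1 * ((nL + 1) * n)" using nD e12 by (simp add: mult_left_mono)
      have t4: "e1 * ((nL + 1) * n) = \<epsilon> / 2 * n" using nLp' by (simp add: e1_def field_simps)
      have t5: "Bd * (e2 * n) \<le> \<epsilon> / 2 * n"
      proof -
        have "Bd * e2 \<le> \<epsilon> / 2" using Bd e by (simp add: e2_def field_simps)
        then show ?thesis using n(5) by (metis mult.assoc mult_right_mono)
      qed
      have "Fs q = sumrate \<alpha> \<sigma>2 W (h \<theta>)" "Fs p = sumrate \<alpha> \<sigma>2 W (h \<theta>0)"
        by (simp_all add: Fs_def p_def q_def h0_def)
      then have "\<bar>sumrate \<alpha> \<sigma>2 W (h \<theta>) - sumrate \<alpha> \<sigma>2 W (h \<theta>0) - D W (\<theta> - \<theta>0)\<bar> \<le> \<epsilon> / 2 * n + \<epsilon> / 2 * n"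
        using t1 t2 t3 t4 t5 by (simp add: abs_le_iff)
      then show ?thesis by (simp add: n_def)
    qed
    then show ?thesis using \<delta> by blast
  qed
  define Cb where "Cb = max Bc 0"
  have eb': "infdist W (argmaxset (\<lambda>W. sumrate \<alpha> \<sigma>2 W (h \<theta>)) X)
               \<le> Cb * (maxval (\<lambda>W. sumrate \<alpha> \<sigma>2 W (h \<theta>)) X - sumrate \<alpha> \<sigma>2 W (h \<theta>)) powr \<eta>"
    if "\<theta> \<in> N" "W \<in> X" for \<theta> W
  proof -
    have "\<theta> \<in> U" "\<theta> \<in> \<Theta>''" using that chain by (auto simp: N_def)
    then have "C \<theta> \<le> Cb" using C_bdd by (auto simp: Cb_def)
    then have "C \<theta> * (maxval (\<lambda>W. sumrate \<alpha> \<sigma>2 W (h \<theta>)) X - sumrate \<alpha> \<sigma>2 W (h \<theta>)) powr \<eta>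
        \<le> Cb * (maxval (\<lambda>W. sumrate \<alpha> \<sigma>2 W (h \<theta>)) X - sumrate \<alpha> \<sigma>2 W (h \<theta>)) powr \<eta>"
      by (rule mult_right_mono) simp
    moreover have "W \<in> feasible P" using that(2) by (simp add: X_def)
    ultimately show ?thesis using eb[rule_format, OF \<open>\<theta> \<in> U\<close>] unfolding X_def by (meson order_trans)
  qed
  have Cb0: "Cb \<ge> 0" by (simp add: Cb_def)
  have "(\<lambda>t. maxval (\<lambda>W. sumrate \<alpha> \<sigma>2 W (h t)) X) differentiable (at \<theta>0)
    \<and> (\<forall>V\<in>argmaxset (\<lambda>W. sumrate \<alpha> \<sigma>2 W (h \<theta>0)) X. \<exists>D'. ((\<lambda>t. sumrate \<alpha> \<sigma>2 V (h t)) has_derivative D') (at \<theta>0)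
          \<and> ((\<lambda>t. maxval (\<lambda>W. sumrate \<alpha> \<sigma>2 W (h t)) X) has_derivative D') (at \<theta>0))"
    by (rule danskin[where g="\<lambda>W t. sumrate \<alpha> \<sigma>2 W (h t)" and D=D, OF X1 N cont lin exp ucont bnd B0 Cb0 \<eta>_pos eb'])
  then show ?thesis by (simp add: X_def)
qed


theorem lemma8:
  fixes M :: "'o measure"
    and H :: "real^'s \<Rightarrow> 'o \<Rightarrow> complex^'m^'k"
    and \<alpha> \<sigma>2 :: "'k \<Rightarrow> real"
    and P B_H L_H0 L_H1 \<eta> :: real
    and \<Theta> \<Theta>' \<Theta>'' U :: "(real^'s) set"
    and C :: "real^'s \<Rightarrow> real"
  assumes prob: "prob_space M"
    and \<alpha>_nonneg: "\<forall>k. \<alpha> k \<ge> 0"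
    and \<sigma>_pos: "\<forall>k. \<sigma>2 k > 0"
    and P_pos: "P > 0"
    and \<Theta>_compact: "compact \<Theta>" and \<Theta>_convex: "convex \<Theta>"
    and U_open: "open U" and \<Theta>_sub: "\<Theta> \<subseteq> U"
    and A3: "AE \<omega> in M.
        (\<forall>\<theta>\<in>\<Theta>. norm (H \<theta> \<omega>) \<le> B_H)
      \<and> C2_on U (\<lambda>\<theta>. H \<theta> \<omega>)
      \<and> L_H0-lipschitz_on \<Theta> (\<lambda>\<theta>. H \<theta> \<omega>)
      \<and> (\<exists>H'. (\<forall>\<theta>\<in>U. ((\<lambda>t. H t \<omega>) has_derivative blinfun_apply (H' \<theta>)) (at \<theta>))
              \<and> L_H1-lipschitz_on \<Theta> H')"
    and analytic: "AE \<omega> in M. real_analytic_on (\<lambda>\<theta>. H \<theta> \<omega>) U"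
    and SOSC: "\<forall>\<theta>\<in>\<Theta>. AE \<omega> in M.
        \<forall>Wopt\<in>argmaxset (\<lambda>W. sumrate \<alpha> \<sigma>2 W (H \<theta> \<omega>)) (feasible P).
          \<exists>lam\<ge>0. ((norm Wopt)\<^sup>2 = P \<longrightarrow> lam > 0) \<and> ((norm Wopt)\<^sup>2 \<noteq> P \<longrightarrow> lam = 0)
            \<and> nonsingular_hessian
                (\<lambda>W. sumrate \<alpha> \<sigma>2 W (H \<theta> \<omega>) + lam * ((norm W)\<^sup>2 - P)) Wopt"
    and \<Theta>''_compact: "compact \<Theta>''" and \<Theta>'_open: "open \<Theta>'"
    and chain: "\<Theta>'' \<subseteq> U" "\<Theta>' \<subseteq> \<Theta>''" "\<Theta> \<subseteq> \<Theta>'"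
    and \<eta>_pos: "\<eta> > 0"
    and C_pos: "\<forall>\<theta>\<in>U. C \<theta> > 0"
    and C_bdd: "\<exists>B. \<forall>\<theta>\<in>\<Theta>''. C \<theta> \<le> B"
    and error_bound: "AE \<omega> in M. \<forall>\<theta>\<in>U. \<forall>W\<in>feasible P.
        infdist W (argmaxset (\<lambda>V. sumrate \<alpha> \<sigma>2 V (H \<theta> \<omega>)) (feasible P))
          \<le> C \<theta> * (maxval (\<lambda>V. sumrate \<alpha> \<sigma>2 V (H \<theta> \<omega>)) (feasible P)
                     - sumrate \<alpha> \<sigma>2 W (H \<theta> \<omega>)) powr \<eta>"
  shows "AE \<omega> in M. \<forall>\<theta>\<in>\<Theta>.
      (\<lambda>t. maxval (\<lambda>W. sumrate \<alpha> \<sigma>2 W (H t \<omega>)) (feasible P)) differentiable (at \<theta>)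
    \<and> (\<forall>Wopt\<in>argmaxset (\<lambda>W. sumrate \<alpha> \<sigma>2 W (H \<theta> \<omega>)) (feasible P).
         \<exists>D. ((\<lambda>t. sumrate \<alpha> \<sigma>2 Wopt (H t \<omega>)) has_derivative D) (at \<theta>)
           \<and> ((\<lambda>t. maxval (\<lambda>W. sumrate \<alpha> \<sigma>2 W (H t \<omega>)) (feasible P)) has_derivative D) (at \<theta>))"
proof -
  obtain Bc where Bc: "\<forall>\<theta>\<in>\<Theta>''. C \<theta> \<le> Bc" using C_bdd by blast
  show ?thesis using A3 error_bound
  proof eventually_elim
    case (elim \<omega>)
    then obtain H' where hd: "\<forall>\<theta>\<in>U. ((\<lambda>t. H t \<omega>) has_derivative blinfun_apply (H' \<theta>)) (at \<theta>)"
      by blast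
    show ?case
    proof
      fix \<theta> assume th: "\<theta> \<in> \<Theta>"
      show "(\<lambda>t. maxval (\<lambda>W. sumrate \<alpha> \<sigma>2 W (H t \<omega>)) (feasible P)) differentiable (at \<theta>)
    \<and> (\<forall>Wopt\<in>argmaxset (\<lambda>W. sumrate \<alpha> \<sigma>2 W (H \<theta> \<omega>)) (feasible P).
         \<exists>D. ((\<lambda>t. sumrate \<alpha> \<sigma>2 Wopt (H t \<omega>)) has_derivative D) (at \<theta>)
           \<and> ((\<lambda>t. maxval (\<lambda>W. sumrate \<alpha> \<sigma>2 W (H t \<omega>)) (feasible P)) has_derivative D) (at \<theta>))"
        by (rule pointwise[where h="\<lambda>t. H t \<omega>", OF \<sigma>_pos P_pos \<Theta>_sub U_open \<Theta>'_open chain(2) chain(3) \<eta>_pos C_pos Bc hd _ th])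
           (use elim in blast)
    qed
  qed
qed

end
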